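(* Consider 35 labels arranged in the left-to-right order $g_0,g_1,r_0,r_1,b_0,b_1,g_2,g_3,g_4,m_0,m_1,g_5,g_6,m_2,m_3,m_4,b_2,b_3,b_4,r_2,r_3,r_4,y_0,y_1,r_5,r_6,y_2,y_3,y_4,b_5,b_6,m_5,m_6,y_5,y_6$, and assign to them any 35 real numbers (their $x$-coordinates) that are strictly increasing in this order. For a color $c\in\{g,r,b,m,y\}$ and $0\le i<j\le 6$, let $d^c_{i,j}$ denote the absolute difference of the $x$-coordinates of $c_i$ and $c_j$. Then there is at least one color $c\in\{g,r,b,m,y\}$ such that $$d^c_{0,1}d^c_{2,3}d^c_{3,4}d^c_{5,6}>d^c_{1,2}d^c_{4,5}d^c_{0,3}d^c_{3,6}$$ does not hold. *)

theory Defs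
  imports Complex_Main
begin

datatype color = G | R | B | M | Y

type_synonym label = "color \<times> nat"

definition label_order :: "label list" where
  "label_order =
    [(G,0),(G,1),(R,0),(R,1),(B,0),(B,1),(G,2),(G,3),(G,4),(M,0),(M,1),(G,5),(G,6),
     (M,2),(M,3),(M,4),(B,2),(B,3),(B,4),(R,2),(R,3),(R,4),(Y,0),(Y,1),(R,5),(R,6),
     (Y,2),(Y,3),(Y,4),(B,5),(B,6),(M,5),(M,6),(Y,5),(Y,6)]"

definition dist_c :: "(label \<Rightarrow> real) \<Rightarrow> color \<Rightarrow> nat \<Rightarrow> nat \<Rightarrow> real" where
  "dist_c x c i j = \<bar>x (c, i) - x (c, j)\<bar>"

end

theory Submission
  imports Defs
begin

lemma plist_le:
  fixes ps :: "(real \<times> real) list"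
  assumes "\<forall>p\<in>set ps. 0 \<le> fst p \<and> fst p \<le> snd p"
  shows "prod_list (map fst ps) \<le> prod_list (map snd ps)"
  using assms
proof (induction ps)
  case Nil then show ?case by simp
next
  case (Cons p ps)
  have "0 \<le> prod_list (map fst ps)" using Cons.prems
    by (induction ps) auto
  then show ?case using Cons by (auto intro!: mult_mono)
qed

lemma plist_less:
  fixes ps :: "(real \<times> real) list"
  assumes "ps \<noteq> []" "\<forall>p\<in>set ps. 0 < fst p \<and> fst p < snd p"
  shows "prod_list (map fst ps) < prod_list (map snd ps)"
  using assms
proof (induction ps)
  case Nil then show ?case by simp
next
  case (Cons p ps)
  show ?case
  proof (cases "ps = []")
    case True then show ?thesis using Cons by simp
  next
    case False
    have "0 < prod_list (map fst ps)" using Cons.prems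
      by (induction ps) auto
    then show ?thesis using Cons False by (auto intro!: mult_strict_mono)
  qed
qed

lemma abstract:
  fixes ag bg cg eg fg gg Ag Eg ar br cr er fr gr Ar Er ab bb cb eb fb gb Ab Eb
        am bm cm em fm gm Am Em ay by' cy ey fy gy Ay Ey :: real
  assumes pos: "0<ag" "0<bg" "0<cg" "0<eg" "0<fg" "0<gg" "0<Ag" "0<Eg" "0<ar" "0<br" "0<cr" "0<er" "0<fr" "0<gr" "0<Ar" "0<Er" "0<ab" "0<bb" "0<cb" "0<eb" "0<fb" "0<gb" "0<Ab" "0<Eb" "0<am" "0<bm" "0<cm" "0<em" "0<fm" "0<gm" "0<Am" "0<Em" "0<ay" "0<by'" "0<cy" "0<ey" "0<fy" "0<gy" "0<Ay" "0<Ey"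
  and m: "ar \<le> bg" "am \<le> fg" "ab \<le> br" "ay \<le> fr" "cg \<le> bb" "cr \<le> fb" "gg \<le> bm" "cb \<le> fm" "gr \<le> by'" "gb \<le> fy" "ag \<le> Ag" "eg \<le> Eg" "eb \<le> Ar" "er \<le> Er" "em \<le> Ab" "ey \<le> Eb" "cm \<le> Am" "gm \<le> Em" "cy \<le> Ay" "gy \<le> Ey"
  and h: "ag*cg*eg*gg > bg*fg*Ag*Eg" "ar*cr*er*gr > br*fr*Ar*Er" "ab*cb*eb*gb > bb*fb*Ab*Eb" "am*cm*em*gm > bm*fm*Am*Em" "ay*cy*ey*gy > by'*fy*Ay*Ey"
  shows False
proof -
  have 1: "(bg*fg*Ag*Eg) * ((br*fr*Ar*Er) * ((bb*fb*Ab*Eb) * ((bm*fm*Am*Em) * ((by'*fy*Ay*Ey))))) < (ag*cg*eg*gg) * ((ar*cr*er*gr) * ((ab*cb*eb*gb) * ((am*cm*em*gm) * ((ay*cy*ey*gy)))))"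
    using plist_less[of "[(bg*fg*Ag*Eg, ag*cg*eg*gg), (br*fr*Ar*Er, ar*cr*er*gr), (bb*fb*Ab*Eb, ab*cb*eb*gb), (bm*fm*Am*Em, am*cm*em*gm), (by'*fy*Ay*Ey, ay*cy*ey*gy)]"] h pos
    by (simp only: list.map prod_list.Cons prod_list.Nil fst_conv snd_conv mult_1_right
        list.set ball_simps insert_iff empty_iff simp_thms list.distinct mult_pos_pos)
  have 2: "ar * (am * (ab * (ay * (cg * (cr * (gg * (cb * (gr * (gb * (ag * (eg * (eb * (er * (em * (ey * (cm * (gm * (cy * (gy))))))))))))))))))) \<le> bg * (fg * (br * (fr * (bb * (fb * (bm * (fm * (by' * (fy * (Ag * (Eg * (Ar * (Er * (Ab * (Eb * (Am * (Em * (Ay * (Ey)))))))))))))))))))"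
    using plist_le[of "[(ar, bg), (am, fg), (ab, br), (ay, fr), (cg, bb), (cr, fb), (gg, bm), (cb, fm), (gr, by'), (gb, fy), (ag, Ag), (eg, Eg), (eb, Ar), (er, Er), (em, Ab), (ey, Eb), (cm, Am), (gm, Em), (cy, Ay), (gy, Ey)]"] m pos
    by (simp only: list.map prod_list.Cons prod_list.Nil fst_conv snd_conv mult_1_right
        list.set ball_simps insert_iff empty_iff simp_thms less_imp_le)
  have e1: "ar * (am * (ab * (ay * (cg * (cr * (gg * (cb * (gr * (gb * (ag * (eg * (eb * (er * (em * (ey * (cm * (gm * (cy * (gy))))))))))))))))))) = (ag*cg*eg*gg) * ((ar*cr*er*gr) * ((ab*cb*eb*gb) * ((am*cm*em*gm) * ((ay*cy*ey*gy)))))" by (simp only: mult_ac)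
  have e2: "bg * (fg * (br * (fr * (bb * (fb * (bm * (fm * (by' * (fy * (Ag * (Eg * (Ar * (Er * (Ab * (Eb * (Am * (Em * (Ay * (Ey))))))))))))))))))) = (bg*fg*Ag*Eg) * ((br*fr*Ar*Er) * ((bb*fb*Ab*Eb) * ((bm*fm*Am*Em) * ((by'*fy*Ay*Ey)))))" by (simp only: mult_ac)
  show False using 1 2 unfolding e1 e2 by linarith
qed

theorem lemma4:
  fixes x :: "label \<Rightarrow> real"
  assumes "sorted_wrt (\<lambda>a b. x a < x b) label_order"
  shows "\<exists>c \<in> {G, R, B, M, Y}.
           \<not> (dist_c x c 0 1 * dist_c x c 2 3 * dist_c x c 3 4 * dist_c x c 5 6
                > dist_c x c 1 2 * dist_c x c 4 5 * dist_c x c 0 3 * dist_c x c 3 6)"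
proof (rule ccontr)
  assume "\<not> ?thesis"
  then have H: "\<forall>c\<in>{G, R, B, M, Y}. dist_c x c 0 1 * dist_c x c 2 3 * dist_c x c 3 4 * dist_c x c 5 6
                > dist_c x c 1 2 * dist_c x c 4 5 * dist_c x c 0 3 * dist_c x c 3 6" by blast
  have "successively (\<lambda>a b. x a < x b) label_order"
    by (rule successively_if_sorted_wrt[OF assms])
  then have S: "x(G,0) < x(G,1) \<and> x(G,1) < x(R,0) \<and> x(R,0) < x(R,1) \<and> x(R,1) < x(B,0) \<and> x(B,0) < x(B,1) \<and> x(B,1) < x(G,2) \<and> x(G,2) < x(G,3) \<and> x(G,3) < x(G,4) \<and> x(G,4) < x(M,0) \<and> x(M,0) < x(M,1) \<and> x(M,1) < x(G,5) \<and> x(G,5) < x(G,6) \<and> x(G,6) < x(M,2) \<and> x(M,2) < x(M,3) \<and> x(M,3) < x(M,4) \<and> x(M,4) < x(B,2) \<and> x(B,2) < x(B,3) \<and> x(B,3) < x(B,4) \<and> x(B,4) < x(R,2) \<and> x(R,2) < x(R,3) \<and> x(R,3) < x(R,4) \<and> x(R,4) < x(Y,0) \<and> x(Y,0) < x(Y,1) \<and> x(Y,1) < x(R,5) \<and> x(R,5) < x(R,6) \<and> x(R,6) < x(Y,2) \<and> x(Y,2) < x(Y,3) \<and> x(Y,3) < x(Y,4) \<and> x(Y,4) < x(B,5) \<and> x(B,5) < x(B,6) \<and> x(B,6) < x(M,5) \<and> x(M,5) < x(M,6) \<and> x(M,6) < x(Y,5) \<and> x(Y,5) < x(Y,6)"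
    by (simp only: label_order_def successively.simps)
  have o: "x(G,0) < x(G,1)" "x(G,1) < x(R,0)" "x(R,0) < x(R,1)" "x(R,1) < x(B,0)" "x(B,0) < x(B,1)" "x(B,1) < x(G,2)" "x(G,2) < x(G,3)" "x(G,3) < x(G,4)" "x(G,4) < x(M,0)" "x(M,0) < x(M,1)" "x(M,1) < x(G,5)" "x(G,5) < x(G,6)" "x(G,6) < x(M,2)" "x(M,2) < x(M,3)" "x(M,3) < x(M,4)" "x(M,4) < x(B,2)" "x(B,2) < x(B,3)" "x(B,3) < x(B,4)" "x(B,4) < x(R,2)" "x(R,2) < x(R,3)" "x(R,3) < x(R,4)" "x(R,4) < x(Y,0)" "x(Y,0) < x(Y,1)" "x(Y,1) < x(R,5)" "x(R,5) < x(R,6)" "x(R,6) < x(Y,2)" "x(Y,2) < x(Y,3)" "x(Y,3) < x(Y,4)" "x(Y,4) < x(B,5)" "x(B,5) < x(B,6)" "x(B,6) < x(M,5)" "x(M,5) < x(M,6)" "x(M,6) < x(Y,5)" "x(Y,5) < x(Y,6)"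
    using S by simp_all
  have ltG01: "x(G,0) < x(G,1)" using o(1) by linarith
  have ltG12: "x(G,1) < x(G,2)" using o(2) o(3) o(4) o(5) o(6) by linarith
  have ltG23: "x(G,2) < x(G,3)" using o(7) by linarith
  have ltG34: "x(G,3) < x(G,4)" using o(8) by linarith
  have ltG45: "x(G,4) < x(G,5)" using o(9) o(10) o(11) by linarith
  have ltG56: "x(G,5) < x(G,6)" using o(12) by linarith
  have ltR01: "x(R,0) < x(R,1)" using o(3) by linarith
  have ltR12: "x(R,1) < x(R,2)" using o(4) o(5) o(6) o(7) o(8) o(9) o(10) o(11) o(12) o(13) o(14) o(15) o(16) o(17) o(18) o(19) by linarith
  have ltR23: "x(R,2) < x(R,3)" using o(20) by linarith
  have ltR34: "x(R,3) < x(R,4)" using o(21) by linarith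
  have ltR45: "x(R,4) < x(R,5)" using o(22) o(23) o(24) by linarith
  have ltR56: "x(R,5) < x(R,6)" using o(25) by linarith
  have ltB01: "x(B,0) < x(B,1)" using o(5) by linarith
  have ltB12: "x(B,1) < x(B,2)" using o(6) o(7) o(8) o(9) o(10) o(11) o(12) o(13) o(14) o(15) o(16) by linarith
  have ltB23: "x(B,2) < x(B,3)" using o(17) by linarith
  have ltB34: "x(B,3) < x(B,4)" using o(18) by linarith
  have ltB45: "x(B,4) < x(B,5)" using o(19) o(20) o(21) o(22) o(23) o(24) o(25) o(26) o(27) o(28) o(29) by linarith
  have ltB56: "x(B,5) < x(B,6)" using o(30) by linarith
  have ltM01: "x(M,0) < x(M,1)" using o(10) by linarith
  have ltM12: "x(M,1) < x(M,2)" using o(11) o(12) o(13) by linarith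
  have ltM23: "x(M,2) < x(M,3)" using o(14) by linarith
  have ltM34: "x(M,3) < x(M,4)" using o(15) by linarith
  have ltM45: "x(M,4) < x(M,5)" using o(16) o(17) o(18) o(19) o(20) o(21) o(22) o(23) o(24) o(25) o(26) o(27) o(28) o(29) o(30) o(31) by linarith
  have ltM56: "x(M,5) < x(M,6)" using o(32) by linarith
  have ltY01: "x(Y,0) < x(Y,1)" using o(23) by linarith
  have ltY12: "x(Y,1) < x(Y,2)" using o(24) o(25) o(26) by linarith
  have ltY23: "x(Y,2) < x(Y,3)" using o(27) by linarith
  have ltY34: "x(Y,3) < x(Y,4)" using o(28) by linarith
  have ltY45: "x(Y,4) < x(Y,5)" using o(29) o(30) o(31) o(32) o(33) by linarith
  have ltY56: "x(Y,5) < x(Y,6)" using o(34) by linarith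
  have ds:
    "dist_c x G 0 1 = x(G,1) - x(G,0)"
    "dist_c x G 1 2 = x(G,2) - x(G,1)"
    "dist_c x G 2 3 = x(G,3) - x(G,2)"
    "dist_c x G 3 4 = x(G,4) - x(G,3)"
    "dist_c x G 4 5 = x(G,5) - x(G,4)"
    "dist_c x G 5 6 = x(G,6) - x(G,5)"
    "dist_c x R 0 1 = x(R,1) - x(R,0)"
    "dist_c x R 1 2 = x(R,2) - x(R,1)"
    "dist_c x R 2 3 = x(R,3) - x(R,2)"
    "dist_c x R 3 4 = x(R,4) - x(R,3)"
    "dist_c x R 4 5 = x(R,5) - x(R,4)"
    "dist_c x R 5 6 = x(R,6) - x(R,5)"
    "dist_c x B 0 1 = x(B,1) - x(B,0)"
    "dist_c x B 1 2 = x(B,2) - x(B,1)"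
    "dist_c x B 2 3 = x(B,3) - x(B,2)"
    "dist_c x B 3 4 = x(B,4) - x(B,3)"
    "dist_c x B 4 5 = x(B,5) - x(B,4)"
    "dist_c x B 5 6 = x(B,6) - x(B,5)"
    "dist_c x M 0 1 = x(M,1) - x(M,0)"
    "dist_c x M 1 2 = x(M,2) - x(M,1)"
    "dist_c x M 2 3 = x(M,3) - x(M,2)"
    "dist_c x M 3 4 = x(M,4) - x(M,3)"
    "dist_c x M 4 5 = x(M,5) - x(M,4)"
    "dist_c x M 5 6 = x(M,6) - x(M,5)"
    "dist_c x Y 0 1 = x(Y,1) - x(Y,0)"
    "dist_c x Y 1 2 = x(Y,2) - x(Y,1)"
    "dist_c x Y 2 3 = x(Y,3) - x(Y,2)"
    "dist_c x Y 3 4 = x(Y,4) - x(Y,3)"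
    "dist_c x Y 4 5 = x(Y,5) - x(Y,4)"
    "dist_c x Y 5 6 = x(Y,6) - x(Y,5)"
    by (simp_all only: dist_c_def) (use ltG01 in simp, use ltG12 in simp, use ltG23 in simp, use ltG34 in simp, use ltG45 in simp, use ltG56 in simp, use ltR01 in simp, use ltR12 in simp, use ltR23 in simp, use ltR34 in simp, use ltR45 in simp, use ltR56 in simp, use ltB01 in simp, use ltB12 in simp, use ltB23 in simp, use ltB34 in simp, use ltB45 in simp, use ltB56 in simp, use ltM01 in simp, use ltM12 in simp, use ltM23 in simp, use ltM34 in simp, use ltM45 in simp, use ltM56 in simp, use ltY01 in simp, use ltY12 in simp, use ltY23 in simp, use ltY34 in simp, use ltY45 in simp, use ltY56 in simp)
  have es:
    "dist_c x G 0 3 = dist_c x G 0 1 + dist_c x G 1 2 + dist_c x G 2 3"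
    "dist_c x G 3 6 = dist_c x G 3 4 + dist_c x G 4 5 + dist_c x G 5 6"
    "dist_c x R 0 3 = dist_c x R 0 1 + dist_c x R 1 2 + dist_c x R 2 3"
    "dist_c x R 3 6 = dist_c x R 3 4 + dist_c x R 4 5 + dist_c x R 5 6"
    "dist_c x B 0 3 = dist_c x B 0 1 + dist_c x B 1 2 + dist_c x B 2 3"
    "dist_c x B 3 6 = dist_c x B 3 4 + dist_c x B 4 5 + dist_c x B 5 6"
    "dist_c x M 0 3 = dist_c x M 0 1 + dist_c x M 1 2 + dist_c x M 2 3"
    "dist_c x M 3 6 = dist_c x M 3 4 + dist_c x M 4 5 + dist_c x M 5 6"
    "dist_c x Y 0 3 = dist_c x Y 0 1 + dist_c x Y 1 2 + dist_c x Y 2 3"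
    "dist_c x Y 3 6 = dist_c x Y 3 4 + dist_c x Y 4 5 + dist_c x Y 5 6"
    by (simp_all only: ds, simp_all only: dist_c_def) (use ltG01 ltG12 ltG23 in simp, use ltG34 ltG45 ltG56 in simp, use ltR01 ltR12 ltR23 in simp, use ltR34 ltR45 ltR56 in simp, use ltB01 ltB12 ltB23 in simp, use ltB34 ltB45 ltB56 in simp, use ltM01 ltM12 ltM23 in simp, use ltM34 ltM45 ltM56 in simp, use ltY01 ltY12 ltY23 in simp, use ltY34 ltY45 ltY56 in simp)
  have Hs:
    "dist_c x G 0 1 * dist_c x G 2 3 * dist_c x G 3 4 * dist_c x G 5 6 > dist_c x G 1 2 * dist_c x G 4 5 * (dist_c x G 0 1 + dist_c x G 1 2 + dist_c x G 2 3) * (dist_c x G 3 4 + dist_c x G 4 5 + dist_c x G 5 6)"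
    "dist_c x R 0 1 * dist_c x R 2 3 * dist_c x R 3 4 * dist_c x R 5 6 > dist_c x R 1 2 * dist_c x R 4 5 * (dist_c x R 0 1 + dist_c x R 1 2 + dist_c x R 2 3) * (dist_c x R 3 4 + dist_c x R 4 5 + dist_c x R 5 6)"
    "dist_c x B 0 1 * dist_c x B 2 3 * dist_c x B 3 4 * dist_c x B 5 6 > dist_c x B 1 2 * dist_c x B 4 5 * (dist_c x B 0 1 + dist_c x B 1 2 + dist_c x B 2 3) * (dist_c x B 3 4 + dist_c x B 4 5 + dist_c x B 5 6)"
    "dist_c x M 0 1 * dist_c x M 2 3 * dist_c x M 3 4 * dist_c x M 5 6 > dist_c x M 1 2 * dist_c x M 4 5 * (dist_c x M 0 1 + dist_c x M 1 2 + dist_c x M 2 3) * (dist_c x M 3 4 + dist_c x M 4 5 + dist_c x M 5 6)"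
    "dist_c x Y 0 1 * dist_c x Y 2 3 * dist_c x Y 3 4 * dist_c x Y 5 6 > dist_c x Y 1 2 * dist_c x Y 4 5 * (dist_c x Y 0 1 + dist_c x Y 1 2 + dist_c x Y 2 3) * (dist_c x Y 3 4 + dist_c x Y 4 5 + dist_c x Y 5 6)"
    using H by (simp_all only: es ball_simps insert_iff empty_iff simp_thms)
  show False
  proof (rule abstract[of "dist_c x G 0 1" "dist_c x G 1 2" "dist_c x G 2 3" "dist_c x G 3 4" "dist_c x G 4 5" "dist_c x G 5 6" "dist_c x G 0 1 + dist_c x G 1 2 + dist_c x G 2 3" "dist_c x G 3 4 + dist_c x G 4 5 + dist_c x G 5 6" "dist_c x R 0 1" "dist_c x R 1 2" "dist_c x R 2 3" "dist_c x R 3 4" "dist_c x R 4 5" "dist_c x R 5 6" "dist_c x R 0 1 + dist_c x R 1 2 + dist_c x R 2 3" "dist_c x R 3 4 + dist_c x R 4 5 + dist_c x R 5 6" "dist_c x B 0 1" "dist_c x B 1 2" "dist_c x B 2 3" "dist_c x B 3 4" "dist_c x B 4 5" "dist_c x B 5 6" "dist_c x B 0 1 + dist_c x B 1 2 + dist_c x B 2 3" "dist_c x B 3 4 + dist_c x B 4 5 + dist_c x B 5 6" "dist_c x M 0 1" "dist_c x M 1 2" "dist_c x M 2 3" "dist_c x M 3 4" "dist_c x M 4 5" "dist_c x M 5 6" "dist_c x M 0 1 + dist_c x M 1 2 + dist_c x M 2 3" "dist_c x M 3 4 + dist_c x M 4 5 + dist_c x M 5 6" "dist_c x Y 0 1"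 "dist_c x Y 1 2" "dist_c x Y 2 3" "dist_c x Y 3 4" "dist_c x Y 4 5" "dist_c x Y 5 6" "dist_c x Y 0 1 + dist_c x Y 1 2 + dist_c x Y 2 3" "dist_c x Y 3 4 + dist_c x Y 4 5 + dist_c x Y 5 6", OF _ _ _ _ _ _ _ _ _ _ _ _ _ _ _ _ _ _ _ _ _ _ _ _ _ _ _ _ _ _ _ _ _ _ _ _ _ _ _ _ _ _ _ _ _ _ _ _ _ _ _ _ _ _ _ _ _ _ _ _ Hs])
    show "0 < dist_c x G 0 1" using ltG01 by (simp only: ds diff_gt_0_iff_gt)
    show "0 < dist_c x G 1 2" using ltG12 by (simp only: ds diff_gt_0_iff_gt)
    show "0 < dist_c x G 2 3" using ltG23 by (simp only: ds diff_gt_0_iff_gt)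
    show "0 < dist_c x G 3 4" using ltG34 by (simp only: ds diff_gt_0_iff_gt)
    show "0 < dist_c x G 4 5" using ltG45 by (simp only: ds diff_gt_0_iff_gt)
    show "0 < dist_c x G 5 6" using ltG56 by (simp only: ds diff_gt_0_iff_gt)
    show "0 < dist_c x R 0 1" using ltR01 by (simp only: ds diff_gt_0_iff_gt)
    show "0 < dist_c x R 1 2" using ltR12 by (simp only: ds diff_gt_0_iff_gt)
    show "0 < dist_c x R 2 3" using ltR23 by (simp only: ds diff_gt_0_iff_gt)
    show "0 < dist_c x R 3 4" using ltR34 by (simp only: ds diff_gt_0_iff_gt)
    show "0 < dist_c x R 4 5" using ltR45 by (simp only: ds diff_gt_0_iff_gt)
    show "0 < dist_c x R 5 6" using ltR56 by (simp only: ds diff_gt_0_iff_gt)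
    show "0 < dist_c x B 0 1" using ltB01 by (simp only: ds diff_gt_0_iff_gt)
    show "0 < dist_c x B 1 2" using ltB12 by (simp only: ds diff_gt_0_iff_gt)
    show "0 < dist_c x B 2 3" using ltB23 by (simp only: ds diff_gt_0_iff_gt)
    show "0 < dist_c x B 3 4" using ltB34 by (simp only: ds diff_gt_0_iff_gt)
    show "0 < dist_c x B 4 5" using ltB45 by (simp only: ds diff_gt_0_iff_gt)
    show "0 < dist_c x B 5 6" using ltB56 by (simp only: ds diff_gt_0_iff_gt)
    show "0 < dist_c x M 0 1" using ltM01 by (simp only: ds diff_gt_0_iff_gt)
    show "0 < dist_c x M 1 2" using ltM12 by (simp only: ds diff_gt_0_iff_gt)
    show "0 < dist_c x M 2 3" using ltM23 by (simp only: ds diff_gt_0_iff_gt)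
    show "0 < dist_c x M 3 4" using ltM34 by (simp only: ds diff_gt_0_iff_gt)
    show "0 < dist_c x M 4 5" using ltM45 by (simp only: ds diff_gt_0_iff_gt)
    show "0 < dist_c x M 5 6" using ltM56 by (simp only: ds diff_gt_0_iff_gt)
    show "0 < dist_c x Y 0 1" using ltY01 by (simp only: ds diff_gt_0_iff_gt)
    show "0 < dist_c x Y 1 2" using ltY12 by (simp only: ds diff_gt_0_iff_gt)
    show "0 < dist_c x Y 2 3" using ltY23 by (simp only: ds diff_gt_0_iff_gt)
    show "0 < dist_c x Y 3 4" using ltY34 by (simp only: ds diff_gt_0_iff_gt)
    show "0 < dist_c x Y 4 5" using ltY45 by (simp only: ds diff_gt_0_iff_gt)
    show "0 < dist_c x Y 5 6" using ltY56 by (simp only: ds diff_gt_0_iff_gt)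
    show "0 < dist_c x G 0 1 + dist_c x G 1 2 + dist_c x G 2 3" unfolding ds using ltG01 ltG12 ltG23 by linarith
    show "0 < dist_c x G 3 4 + dist_c x G 4 5 + dist_c x G 5 6" unfolding ds using ltG34 ltG45 ltG56 by linarith
    show "0 < dist_c x R 0 1 + dist_c x R 1 2 + dist_c x R 2 3" unfolding ds using ltR01 ltR12 ltR23 by linarith
    show "0 < dist_c x R 3 4 + dist_c x R 4 5 + dist_c x R 5 6" unfolding ds using ltR34 ltR45 ltR56 by linarith
    show "0 < dist_c x B 0 1 + dist_c x B 1 2 + dist_c x B 2 3" unfolding ds using ltB01 ltB12 ltB23 by linarith
    show "0 < dist_c x B 3 4 + dist_c x B 4 5 + dist_c x B 5 6" unfolding ds using ltB34 ltB45 ltB56 by linarith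
    show "0 < dist_c x M 0 1 + dist_c x M 1 2 + dist_c x M 2 3" unfolding ds using ltM01 ltM12 ltM23 by linarith
    show "0 < dist_c x M 3 4 + dist_c x M 4 5 + dist_c x M 5 6" unfolding ds using ltM34 ltM45 ltM56 by linarith
    show "0 < dist_c x Y 0 1 + dist_c x Y 1 2 + dist_c x Y 2 3" unfolding ds using ltY01 ltY12 ltY23 by linarith
    show "0 < dist_c x Y 3 4 + dist_c x Y 4 5 + dist_c x Y 5 6" unfolding ds using ltY34 ltY45 ltY56 by linarith
    show "dist_c x R 0 1 \<le> dist_c x G 1 2" unfolding ds using o(2) o(4) o(5) o(6) by linarith
    show "dist_c x M 0 1 \<le> dist_c x G 4 5" unfolding ds using o(9) o(11) by linarith
    show "dist_c x B 0 1 \<le> dist_c x R 1 2" unfolding ds using o(4) o(6) o(7) o(8) o(9) o(10) o(11) o(12) o(13) o(14) o(15) o(16) o(17) o(18) o(19) by linarith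
    show "dist_c x Y 0 1 \<le> dist_c x R 4 5" unfolding ds using o(22) o(24) by linarith
    show "dist_c x G 2 3 \<le> dist_c x B 1 2" unfolding ds using o(6) o(8) o(9) o(10) o(11) o(12) o(13) o(14) o(15) o(16) by linarith
    show "dist_c x R 2 3 \<le> dist_c x B 4 5" unfolding ds using o(19) o(21) o(22) o(23) o(24) o(25) o(26) o(27) o(28) o(29) by linarith
    show "dist_c x G 5 6 \<le> dist_c x M 1 2" unfolding ds using o(11) o(13) by linarith
    show "dist_c x B 2 3 \<le> dist_c x M 4 5" unfolding ds using o(16) o(18) o(19) o(20) o(21) o(22) o(23) o(24) o(25) o(26) o(27) o(28) o(29) o(30) o(31) by linarith
    show "dist_c x R 5 6 \<le> dist_c x Y 1 2" unfolding ds using o(24) o(26) by linarith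
    show "dist_c x B 5 6 \<le> dist_c x Y 4 5" unfolding ds using o(29) o(31) o(32) o(33) by linarith
    show "dist_c x G 0 1 \<le> dist_c x G 0 1 + dist_c x G 1 2 + dist_c x G 2 3" unfolding ds using  o(2) o(3) o(4) o(5) o(6) o(7) by linarith
    show "dist_c x G 3 4 \<le> dist_c x G 3 4 + dist_c x G 4 5 + dist_c x G 5 6" unfolding ds using  o(9) o(10) o(11) o(12) by linarith
    show "dist_c x B 3 4 \<le> dist_c x R 0 1 + dist_c x R 1 2 + dist_c x R 2 3" unfolding ds using o(3) o(4) o(5) o(6) o(7) o(8) o(9) o(10) o(11) o(12) o(13) o(14) o(15) o(16) o(17) o(19) o(20) by linarith
    show "dist_c x R 3 4 \<le> dist_c x R 3 4 + dist_c x R 4 5 + dist_c x R 5 6" unfolding ds using  o(22) o(23) o(24) o(25) by linarith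
    show "dist_c x M 3 4 \<le> dist_c x B 0 1 + dist_c x B 1 2 + dist_c x B 2 3" unfolding ds using o(5) o(6) o(7) o(8) o(9) o(10) o(11) o(12) o(13) o(14) o(16) o(17) by linarith
    show "dist_c x Y 3 4 \<le> dist_c x B 3 4 + dist_c x B 4 5 + dist_c x B 5 6" unfolding ds using o(18) o(19) o(20) o(21) o(22) o(23) o(24) o(25) o(26) o(27) o(29) o(30) by linarith
    show "dist_c x M 2 3 \<le> dist_c x M 0 1 + dist_c x M 1 2 + dist_c x M 2 3" unfolding ds using o(10) o(11) o(12) o(13)  by linarith
    show "dist_c x M 5 6 \<le> dist_c x M 3 4 + dist_c x M 4 5 + dist_c x M 5 6" unfolding ds using o(15) o(16) o(17) o(18) o(19) o(20) o(21) o(22) o(23) o(24) o(25) o(26) o(27) o(28) o(29) o(30) o(31)  by linarith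
    show "dist_c x Y 2 3 \<le> dist_c x Y 0 1 + dist_c x Y 1 2 + dist_c x Y 2 3" unfolding ds using o(23) o(24) o(25) o(26)  by linarith
    show "dist_c x Y 5 6 \<le> dist_c x Y 3 4 + dist_c x Y 4 5 + dist_c x Y 5 6" unfolding ds using o(28) o(29) o(30) o(31) o(32) o(33)  by linarith
  qed
qed

end
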